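(* There is an absolute constant $C$ such that for every graph $G$ with a proper vertex coloring $c:V\to[q]$, the threshold graph $G'$ constructed from $(G,q)$ as described in the context has treewidth at most $Cq^2$ (i.e., $G'$ has treewidth $O(q^2)$).
   Context: Construction of $G'$: let $G=(V,E)$, $n=|V|$, $m=|E|$, $V_c$ the nodes of color $c$ and, for distinct $c,d$, $E_{cd}$ the edges between $V_c$ and $V_d$. A parallel-paths gadget of size $h$ between nodes $x,y$ consists of $h$ new "connection" nodes, each adjacent exactly to $x$ and $y$. For each $c\in[q]$ add a node $x_v$ for each $v\in V_c$ and a guard node $g_c$ adjacent to all these $x_v$. For each unordered pair $\{c,d\}$ of distinct colors add a node $x_{u,v}$ for each edge $(u,v)\in E_{cd}$ and a guard node $g_{cd}$ adjacent to all of them. Assign to each $v\in V$ a distinct $low(v)\in[n]$ and set $high(v)=2n-low(v)$. For each unordered pair $\{c,d\}$ and each of its two colors, say $c$, add two validation nodes $\alpha,\beta$: $\alpha$ is joined to each $x_v$ ($v\in V_c$) by a parallel-paths gadget of size $high(v)$ and to each $x_{u,v}$ with $(u,v)\in E_{cd}$, $v\in V_c$, by a parallel-paths gadget of size $low(v)$; $\beta$ is joined to each such $x_v$ by size $low(v)$ and to each such $x_{u,v}$ by size $high(v)$ (symmetrically for color $d$). Finally add a set $B$ of $(n-q)(2nq-2n+1)+\left(m-\binom q2\right)(4n+1)$ independent nodes, each adjacent to every guard node. (Thresholds are irrelevant for treewidth.) *)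

theory Defs
  imports Main
begin

definition simple_graph :: "'a set \<Rightarrow> 'a set set \<Rightarrow> bool" where
  "simple_graph V E \<longleftrightarrow> finite V \<and> (\<forall>e\<in>E. \<exists>u v. e = {u, v} \<and> u \<noteq> v \<and> u \<in> V \<and> v \<in> V)"

definition adj_in :: "'a set \<Rightarrow> 'a set set \<Rightarrow> ('a \<times> 'a) set" where
  "adj_in S E = {(a, b). {a, b} \<in> E \<and> a \<in> S \<and> b \<in> S}"

definition connected_on :: "'a set \<Rightarrow> 'a set set \<Rightarrow> bool" where
  "connected_on S E \<longleftrightarrow> (\<forall>x\<in>S. \<forall>y\<in>S. (x, y) \<in> (adj_in S E)\<^sup>*)"

text \<open>A tree: a nonempty finite connected simple graph that is acyclic; acyclicity is
  expressed as: no edge lies on a cycle, i.e. every edge is a bridge.\<close>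
definition is_tree :: "'a set \<Rightarrow> 'a set set \<Rightarrow> bool" where
  "is_tree I F \<longleftrightarrow> simple_graph I F \<and> I \<noteq> {} \<and> connected_on I F \<and>
     (\<forall>e\<in>F. \<not> connected_on I (F - {e}))"

definition tree_decomposition ::
  "'a set \<Rightarrow> 'a set set \<Rightarrow> nat set \<Rightarrow> nat set set \<Rightarrow> (nat \<Rightarrow> 'a set) \<Rightarrow> bool" where
  "tree_decomposition V E I F bag \<longleftrightarrow>
     is_tree I F \<and>
     (\<forall>i\<in>I. bag i \<subseteq> V) \<and>
     (\<forall>v\<in>V. \<exists>i\<in>I. v \<in> bag i) \<and>
     (\<forall>e\<in>E. \<exists>i\<in>I. e \<subseteq> bag i) \<and>
     (\<forall>v\<in>V. connected_on {i\<in>I. v \<in> bag i} {f\<in>F. f \<subseteq> {i\<in>I. v \<in> bag i}})"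

definition decomp_width :: "nat set \<Rightarrow> (nat \<Rightarrow> 'a set) \<Rightarrow> nat" where
  "decomp_width I bag = Max ((\<lambda>i. card (bag i)) ` I) - 1"

definition treewidth :: "'a set \<Rightarrow> 'a set set \<Rightarrow> nat" where
  "treewidth V E = (LEAST w. \<exists>I F bag. tree_decomposition V E I F bag \<and> decomp_width I bag = w)"

text \<open>Unordered colour pairs {c,d} are represented by c < d.
  Alpha c d k / Beta c d k are the validation nodes of pair {c,d} for colour k \<in> {c,d}.
  Conn a x i is the i-th connection node of the parallel-paths gadget between a and x.
  BN j is the j-th node of the set B.\<close>
datatype gnode = XV nat | GC nat | XE "nat set" | GCP nat nat
  | Alpha nat nat nat | Beta nat nat nat | Conn gnode gnode nat | BN nat

definition proper_coloring :: "nat set \<Rightarrow> nat set set \<Rightarrow> (nat \<Rightarrow> nat) \<Rightarrow> nat \<Rightarrow> bool" where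
  "proper_coloring V E col q \<longleftrightarrow> (\<forall>v\<in>V. col v \<in> {1..q}) \<and>
     (\<forall>u v. {u, v} \<in> E \<longrightarrow> u \<noteq> v \<longrightarrow> col u \<noteq> col v)"

definition color_pairs :: "nat \<Rightarrow> (nat \<times> nat) set" where
  "color_pairs q = {(c, d). 1 \<le> c \<and> c < d \<and> d \<le> q}"

definition guards :: "nat \<Rightarrow> gnode set" where
  "guards q = GC ` {1..q} \<union> (case_prod GCP) ` color_pairs q"

definition high :: "nat \<Rightarrow> (nat \<Rightarrow> nat) \<Rightarrow> nat \<Rightarrow> nat" where
  "high n low v = 2 * n - low v"

text \<open>The gadgets (a, x, h): a parallel-paths gadget of size h between a and x.\<close>
definition gadgets :: "nat set \<Rightarrow> nat set set \<Rightarrow> (nat \<Rightarrow> nat) \<Rightarrow> nat \<Rightarrow> (nat \<Rightarrow> nat)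
    \<Rightarrow> (gnode \<times> gnode \<times> nat) set" where
  "gadgets V E col q low = (let n = card V in
     {(Alpha c d k, XV v, high n low v) | c d k v.
        (c, d) \<in> color_pairs q \<and> k \<in> {c, d} \<and> v \<in> V \<and> col v = k} \<union>
     {(Alpha c d k, XE e, low v) | c d k e v.
        (c, d) \<in> color_pairs q \<and> k \<in> {c, d} \<and> e \<in> E \<and> col ` e = {c, d} \<and> v \<in> e \<and> col v = k} \<union>
     {(Beta c d k, XV v, low v) | c d k v.
        (c, d) \<in> color_pairs q \<and> k \<in> {c, d} \<and> v \<in> V \<and> col v = k} \<union>
     {(Beta c d k, XE e, high n low v) | c d k e v.
        (c, d) \<in> color_pairs q \<and> k \<in> {c, d} \<and> e \<in> E \<and> col ` e = {c, d} \<and> v \<in> e \<and> col v = k})"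

text \<open>Size of the set B (natural-number subtraction).\<close>
definition B_size :: "nat set \<Rightarrow> nat set set \<Rightarrow> nat \<Rightarrow> nat" where
  "B_size V E q = (let n = card V; m = card E in
     (n - q) * (2 * n * q - 2 * n + 1) + (m - (q choose 2)) * (4 * n + 1))"

definition G'_nodes :: "nat set \<Rightarrow> nat set set \<Rightarrow> (nat \<Rightarrow> nat) \<Rightarrow> nat \<Rightarrow> (nat \<Rightarrow> nat) \<Rightarrow> gnode set" where
  "G'_nodes V E col q low =
     XV ` V \<union> GC ` {1..q} \<union> XE ` E \<union> (case_prod GCP) ` color_pairs q \<union>
     {Alpha c d k | c d k. (c, d) \<in> color_pairs q \<and> k \<in> {c, d}} \<union>
     {Beta c d k | c d k. (c, d) \<in> color_pairs q \<and> k \<in> {c, d}} \<union>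
     {Conn a x i | a x h i. (a, x, h) \<in> gadgets V E col q low \<and> i < h} \<union>
     BN ` {..<B_size V E q}"

definition G'_edges :: "nat set \<Rightarrow> nat set set \<Rightarrow> (nat \<Rightarrow> nat) \<Rightarrow> nat \<Rightarrow> (nat \<Rightarrow> nat) \<Rightarrow> gnode set set" where
  "G'_edges V E col q low =
     {{GC c, XV v} | c v. c \<in> {1..q} \<and> v \<in> V \<and> col v = c} \<union>
     {{GCP c d, XE e} | c d e. (c, d) \<in> color_pairs q \<and> e \<in> E \<and> col ` e = {c, d}} \<union>
     {{a, Conn a x i} | a x h i. (a, x, h) \<in> gadgets V E col q low \<and> i < h} \<union>
     {{Conn a x i, x} | a x h i. (a, x, h) \<in> gadgets V E col q low \<and> i < h} \<union>
     {{BN j, g} | j g. j < B_size V E q \<and> g \<in> guards q}"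

end

theory Submission
  imports Defs
begin

lemma adj_sym: "(a,b) \<in> adj_in S E \<Longrightarrow> (b,a) \<in> adj_in S E"
  by (auto simp: adj_in_def insert_commute)

lemma rt_sym: "(x,y) \<in> (adj_in S E)\<^sup>* \<Longrightarrow> (y,x) \<in> (adj_in S E)\<^sup>*"
proof (induction rule: rtrancl_induct)
  case base then show ?case by simp
next
  case (step y z) then show ?case
    by (meson adj_sym converse_rtrancl_into_rtrancl)
qed

lemma connected_star:
  assumes "r \<in> S" "\<And>x. x \<in> S \<Longrightarrow> (x, r) \<in> (adj_in S E)\<^sup>*"
  shows "connected_on S E"
  unfolding connected_on_def
  using assms rt_sym rtrancl_trans by metis

lemma closed_reach:
  "(x,z) \<in> R\<^sup>* \<Longrightarrow> x \<in> A \<Longrightarrow> (\<And>a b. (a,b) \<in> R \<Longrightarrow> a \<in> A \<Longrightarrow> b \<in> A) \<Longrightarrow> z \<in> A"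
  by (induction rule: rtrancl_induct) auto

lemma tw_le:
  assumes "tree_decomposition V E I F bag" "finite I" "I \<noteq> {}" "\<forall>i\<in>I. card (bag i) \<le> b"
  shows "treewidth V E \<le> b - 1"
proof -
  have "decomp_width I bag \<le> b - 1"
    using assms(2-4) unfolding decomp_width_def by (simp add: diff_le_mono)
  moreover have "treewidth V E \<le> decomp_width I bag"
    unfolding treewidth_def by (rule Least_le) (use assms(1) in blast)
  ultimately show ?thesis by simp
qed

lemma star_decomp:
  fixes V :: "'a set"
  assumes finV: "finite V" and KV: "K \<subseteq> V"
  and pW: "\<And>y. y \<in> V - K \<Longrightarrow> p y \<in> V - K"
  and pp: "\<And>y. y \<in> V - K \<Longrightarrow> p (p y) = p y"
  and Ecov: "\<And>e. e \<in> E \<Longrightarrow> e \<subseteq> K \<or> (\<exists>y\<in>V-K. e \<subseteq> K \<union> {y, p y})"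
  shows "\<exists>I F bag. tree_decomposition V E I F bag \<and> finite I \<and> I \<noteq> {} \<and>
           (\<forall>i\<in>I. card (bag i) \<le> card K + 2)"
proof -
  define W where "W = V - K"
  have finW: "finite W" using finV W_def by simp
  obtain f where f: "bij_betw f W {0..<card W}" using ex_bij_betw_finite_nat[OF finW] by blast
  define \<iota> where "\<iota> = (\<lambda>y. Suc (f y))"
  have inj: "inj_on \<iota> W" using bij_betw_imp_inj_on[OF f] unfolding \<iota>_def inj_on_def by simp
  have ne0[simp]: "\<And>y. \<iota> y \<noteq> 0" "\<And>y. 0 \<noteq> \<iota> y" by (auto simp: \<iota>_def)
  have injI: "\<And>x y. x \<in> W \<Longrightarrow> y \<in> W \<Longrightarrow> \<iota> x = \<iota> y \<longleftrightarrow> x = y" using inj by (meson inj_onD)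
  define g where "g = inv_into W \<iota>"
  have g: "\<And>y. y \<in> W \<Longrightarrow> g (\<iota> y) = y" unfolding g_def using inj by (simp add: inv_into_f_f)
  have pW': "\<And>y. y \<in> W \<Longrightarrow> p y \<in> W" and pp': "\<And>y. y \<in> W \<Longrightarrow> p (p y) = p y"
    using pW pp W_def by auto
  define I where "I = insert 0 (\<iota> ` W)"
  define F where "F = {{0, \<iota> r} | r. r \<in> W \<and> p r = r} \<union> {{\<iota> y, \<iota> (p y)} | y. y \<in> W \<and> p y \<noteq> y}"
  define bag where "bag = (\<lambda>i. if i = 0 then K else K \<union> {g i, p (g i)})"
  have bag0: "bag 0 = K" by (simp add: bag_def)
  have bagy: "\<And>y. y \<in> W \<Longrightarrow> bag (\<iota> y) = K \<union> {y, p y}" by (simp add: bag_def g)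
  have WK: "\<And>w. w \<in> W \<Longrightarrow> w \<notin> K" by (simp add: W_def)
  have finI: "finite I" using finW I_def by simp
  have FI: "\<And>e. e \<in> F \<Longrightarrow> e \<subseteq> I" unfolding F_def I_def using pW' by auto
  have reach: "\<And>x. x \<in> I \<Longrightarrow> (x, 0) \<in> (adj_in I F)\<^sup>*"
  proof -
    fix x assume "x \<in> I"
    have rootr: "(\<iota> r, 0) \<in> (adj_in I F)\<^sup>*" if "r \<in> W" "p r = r" for r
    proof -
      have "{\<iota> r, 0} \<in> F" unfolding F_def using that by (auto simp: insert_commute)
      then have "(\<iota> r, 0) \<in> adj_in I F" using that by (auto simp: adj_in_def I_def)
      then show ?thesis by simp
    qed
    show "(x, 0) \<in> (adj_in I F)\<^sup>*"
    proof (cases "x = 0")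
      case True then show ?thesis by simp
    next
      case False
      then obtain y where y: "y \<in> W" "x = \<iota> y" using \<open>x \<in> I\<close> I_def by auto
      show ?thesis
      proof (cases "p y = y")
        case True then show ?thesis using rootr y by simp
      next
        case False
        have "{\<iota> y, \<iota> (p y)} \<in> F" unfolding F_def using y False by auto
        then have "(\<iota> y, \<iota> (p y)) \<in> adj_in I F" using y pW' by (auto simp: adj_in_def I_def)
        moreover have "(\<iota> (p y), 0) \<in> (adj_in I F)\<^sup>*" using rootr pW' pp' y by blast
        ultimately show ?thesis using y by (meson converse_rtrancl_into_rtrancl)
      qed
    qed
  qed
  have conI: "connected_on I F"
    by (rule connected_star[of 0]) (simp add: I_def, rule reach)
  have simpI: "simple_graph I F"
    unfolding simple_graph_def
  proof (intro conjI ballI)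
    show "finite I" by (rule finI)
  next
    fix e assume "e \<in> F"
    then consider (R) r where "r \<in> W" "p r = r" "e = {0, \<iota> r}"
      | (N) y where "y \<in> W" "p y \<noteq> y" "e = {\<iota> y, \<iota> (p y)}"
      unfolding F_def by blast
    then show "\<exists>u v. e = {u, v} \<and> u \<noteq> v \<and> u \<in> I \<and> v \<in> I"
    proof cases
      case R then show ?thesis unfolding I_def by (intro exI[of _ 0] exI[of _ "\<iota> r"]) auto
    next
      case N
      then have "\<iota> y \<noteq> \<iota> (p y)" using injI pW' by metis
      then show ?thesis using N pW' unfolding I_def by (intro exI[of _ "\<iota> y"] exI[of _ "\<iota> (p y)"]) auto
    qed
  qed
  have bridge: "\<not> connected_on I (F - {e})" if eF: "e \<in> F" for e
  proof -
    from eF consider (R) r where "r \<in> W" "p r = r" "e = {0, \<iota> r}"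
      | (N) y where "y \<in> W" "p y \<noteq> y" "e = {\<iota> y, \<iota> (p y)}"
      unfolding F_def by blast
    then show ?thesis
    proof cases
      case R
      define S where "S = {\<iota> y | y. y \<in> W \<and> p y = r}"
      show ?thesis
      proof
        assume c: "connected_on I (F - {e})"
        have "(\<iota> r, 0) \<in> (adj_in I (F - {e}))\<^sup>*" using c R by (auto simp: connected_on_def I_def)
        then have "0 \<in> S"
        proof (rule closed_reach)
          show "\<iota> r \<in> S" using R by (auto simp: S_def)
        next
          fix a b assume ab: "(a, b) \<in> adj_in I (F - {e})" and aS: "a \<in> S"
          then have abF: "{a, b} \<in> F" "{a, b} \<noteq> e" by (auto simp: adj_in_def)
          from abF(1) consider (R') r' where "r' \<in> W" "p r' = r'" "{a, b} = {0, \<iota> r'}"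
            | (N') y' where "y' \<in> W" "p y' \<noteq> y'" "{a, b} = {\<iota> y', \<iota> (p y')}"
            unfolding F_def by blast
          then show "b \<in> S"
          proof cases
            case R'
            from aS obtain z where z: "z \<in> W" "p z = r" "a = \<iota> z" by (auto simp: S_def)
            then have a: "a = \<iota> r'" "b = 0" using R'(3) by (auto simp: doubleton_eq_iff)
            then have "z = r'" using z R'(1) injI by metis
            then have "r = r'" using z R'(2) by simp
            then show ?thesis using abF(2) R(3) R'(3) by simp
          next
            case N'
            from aS obtain z where z: "z \<in> W" "p z = r" "a = \<iota> z" by (auto simp: S_def)
            have "a = \<iota> y' \<or> a = \<iota> (p y')" using N'(3) by (auto simp: doubleton_eq_iff)
            then have "p y' = r"
            proof
              assume "a = \<iota> y'" then have "z = y'" using z N'(1) injI by metis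
              then show ?thesis using z by simp
            next
              assume "a = \<iota> (p y')" then have "z = p y'" using z N'(1) pW' injI by metis
              then show ?thesis using z pp' N'(1) by simp
            qed
            moreover have "b = \<iota> y' \<or> b = \<iota> (p y')" using N'(3) by (auto simp: doubleton_eq_iff)
            ultimately show ?thesis using N'(1) pW' pp' unfolding S_def by auto
          qed
        qed
        then show False by (auto simp: S_def)
      qed
    next
      case N
      show ?thesis
      proof
        assume c: "connected_on I (F - {e})"
        have "(\<iota> y, 0) \<in> (adj_in I (F - {e}))\<^sup>*" using c N by (auto simp: connected_on_def I_def)
        then have "0 \<in> {\<iota> y}"
        proof (rule closed_reach)
          fix a b assume ab: "(a, b) \<in> adj_in I (F - {e})" and aS: "a \<in> {\<iota> y}"
          then have abF: "{a, b} \<in> F" "{a, b} \<noteq> e" by (auto simp: adj_in_def)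
          from abF(1) consider (R') r' where "r' \<in> W" "p r' = r'" "{a, b} = {0, \<iota> r'}"
            | (N') y' where "y' \<in> W" "p y' \<noteq> y'" "{a, b} = {\<iota> y', \<iota> (p y')}"
            unfolding F_def by blast
          then show "b \<in> {\<iota> y}"
          proof cases
            case R'
            have "a \<noteq> 0" using aS by simp
            then have "a = \<iota> r'" using R'(3) by (auto simp: doubleton_eq_iff)
            then have "y = r'" using aS R'(1) N(1) injI by simp
            then show ?thesis using R'(2) N(2) by simp
          next
            case N'
            have "a = \<iota> y' \<or> a = \<iota> (p y')" using N'(3) by (auto simp: doubleton_eq_iff)
            then show ?thesis
            proof
              assume "a = \<iota> y'" then have "y = y'" using aS N(1) N'(1) injI by simp
              then show ?thesis using abF(2) N(3) N'(3) by simp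
            next
              assume "a = \<iota> (p y')" then have "y = p y'" using aS N(1) N'(1) pW' injI by simp
              then have "p y = y" using pp' N'(1) by simp
              then show ?thesis using N(2) by simp
            qed
          qed
        qed simp
        then show False by simp
      qed
    qed
  qed
  have tree: "is_tree I F" unfolding is_tree_def using simpI conI bridge by (auto simp: I_def)
  have occ: "connected_on {i\<in>I. v \<in> bag i} {f\<in>F. f \<subseteq> {i\<in>I. v \<in> bag i}}" if "v \<in> V" for v
  proof (cases "v \<in> K")
    case True
    then have "{i\<in>I. v \<in> bag i} = I" by (auto simp: I_def bag_def)
    moreover have "{f\<in>F. f \<subseteq> I} = F" using FI by auto
    ultimately show ?thesis using conI by simp
  next
    case False
    then have vW: "v \<in> W" using that W_def by simp
    have occ_eq: "{i\<in>I. v \<in> bag i} = \<iota> ` {z \<in> W. v = z \<or> v = p z}"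
      using False by (auto simp: I_def bag0 bagy)
    show ?thesis
    proof (cases "p v = v")
      case True
      show ?thesis
      proof (rule connected_star[of "\<iota> v"])
        show "\<iota> v \<in> {i\<in>I. v \<in> bag i}" using occ_eq vW by auto
      next
        fix x assume "x \<in> {i\<in>I. v \<in> bag i}"
        then obtain z where z: "z \<in> W" "v = z \<or> v = p z" "x = \<iota> z" using occ_eq by auto
        show "(x, \<iota> v) \<in> (adj_in {i\<in>I. v \<in> bag i} {f\<in>F. f \<subseteq> {i\<in>I. v \<in> bag i}})\<^sup>*"
        proof (cases "z = v")
          case True then show ?thesis using z by simp
        next
          case False
          then have pz: "p z = v" "p z \<noteq> z" using z by auto
          have "{\<iota> z, \<iota> (p z)} \<in> F" unfolding F_def using z pz by auto
          moreover have "\<iota> z \<in> {i\<in>I. v \<in> bag i}" "\<iota> v \<in> {i\<in>I. v \<in> bag i}"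
            using occ_eq z vW by auto
          ultimately have "(x, \<iota> v) \<in> adj_in {i\<in>I. v \<in> bag i} {f\<in>F. f \<subseteq> {i\<in>I. v \<in> bag i}}"
            using z pz by (auto simp: adj_in_def)
          then show ?thesis by simp
        qed
      qed
    next
      case nr: False
      have "{i\<in>I. v \<in> bag i} = {\<iota> v}"
      proof -
        have "{z \<in> W. v = z \<or> v = p z} = {v}" using vW nr pp' by auto
        then show ?thesis using occ_eq by simp
      qed
      then show ?thesis by (auto simp: connected_on_def)
    qed
  qed
  have td: "tree_decomposition V E I F bag"
    unfolding tree_decomposition_def
  proof (intro conjI ballI)
    show "is_tree I F" by (rule tree)
  next
    fix i assume "i \<in> I" then show "bag i \<subseteq> V"
      using KV pW' by (auto simp: I_def bag0 bagy W_def)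
  next
    fix v assume "v \<in> V" then show "\<exists>i\<in>I. v \<in> bag i"
      by (cases "v \<in> K") (auto simp: I_def bag0 bagy W_def intro!: bexI[of _ "\<iota> v"])
  next
    fix e assume "e \<in> E"
    from Ecov[OF this] show "\<exists>i\<in>I. e \<subseteq> bag i"
    proof
      assume "e \<subseteq> K" then show ?thesis by (auto simp: I_def bag0)
    next
      assume "\<exists>y\<in>V-K. e \<subseteq> K \<union> {y, p y}"
      then obtain y where "y \<in> W" "e \<subseteq> K \<union> {y, p y}" by (auto simp: W_def)
      then show ?thesis by (auto simp: I_def bagy intro!: bexI[of _ "\<iota> y"])
    qed
  next
    fix v assume "v \<in> V" then show "connected_on {i\<in>I. v \<in> bag i} {f\<in>F. f \<subseteq> {i\<in>I. v \<in> bag i}}"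
      by (rule occ)
  qed
  have cb: "\<forall>i\<in>I. card (bag i) \<le> card K + 2"
  proof
    fix i assume "i \<in> I"
    have finK: "finite K" using KV finV finite_subset by blast
    have "card (K \<union> {a, b}) \<le> card K + 2" for a b
      using finK by (simp add: card_insert_if)
    then show "card (bag i) \<le> card K + 2" using \<open>i \<in> I\<close> by (auto simp: I_def bag0 bagy)
  qed
  show ?thesis using td finI cb by (auto simp: I_def)
qed


lemma tdecomp_card:
  assumes "tree_decomposition V E I F bag" "finite V" "i \<in> I"
  shows "card (bag i) \<le> card V"
proof -
  have "bag i \<subseteq> V" using assms(1,3) unfolding tree_decomposition_def by blast
  then show ?thesis using assms(2) by (rule card_mono[rotated])
qed

definition AB :: "nat \<Rightarrow> gnode set" where
  "AB q = {Alpha c d k | c d k. (c, d) \<in> color_pairs q \<and> k \<in> {c, d}} \<union>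
          {Beta c d k | c d k. (c, d) \<in> color_pairs q \<and> k \<in> {c, d}}"

definition pmap :: "gnode \<Rightarrow> gnode" where
  "pmap y = (case y of Conn a x i \<Rightarrow> x | _ \<Rightarrow> y)"

lemma pairs_sub: "color_pairs q \<subseteq> {1..q} \<times> {1..q}"
  by (auto simp: color_pairs_def)

lemma pairs_fin: "finite (color_pairs q)"
  using pairs_sub finite_subset by blast

lemma pairs_card: "card (color_pairs q) \<le> q * q"
  using card_mono[OF _ pairs_sub] by simp

lemma AB_sub: "AB q \<subseteq> (\<lambda>(c,d). Alpha c d c) ` color_pairs q \<union> (\<lambda>(c,d). Alpha c d d) ` color_pairs q
   \<union> (\<lambda>(c,d). Beta c d c) ` color_pairs q \<union> (\<lambda>(c,d). Beta c d d) ` color_pairs q"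
proof
  fix y assume "y \<in> AB q"
  then obtain c d k where ck: "(c, d) \<in> color_pairs q" "k = c \<or> k = d" "y = Alpha c d k \<or> y = Beta c d k"
    unfolding AB_def by blast
  have a1: "Alpha c d c \<in> (\<lambda>(c,d). Alpha c d c) ` color_pairs q" using ck(1) by (rule rev_image_eqI) simp
  have a2: "Alpha c d d \<in> (\<lambda>(c,d). Alpha c d d) ` color_pairs q" using ck(1) by (rule rev_image_eqI) simp
  have a3: "Beta c d c \<in> (\<lambda>(c,d). Beta c d c) ` color_pairs q" using ck(1) by (rule rev_image_eqI) simp
  have a4: "Beta c d d \<in> (\<lambda>(c,d). Beta c d d) ` color_pairs q" using ck(1) by (rule rev_image_eqI) simp
  from ck(2,3) a1 a2 a3 a4 show "y \<in> (\<lambda>(c,d). Alpha c d c) ` color_pairs q \<union> (\<lambda>(c,d). Alpha c d d) ` color_pairs q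
   \<union> (\<lambda>(c,d). Beta c d c) ` color_pairs q \<union> (\<lambda>(c,d). Beta c d d) ` color_pairs q"
    by blast
qed

lemma AB_fin: "finite (AB q)"
  by (rule finite_subset[OF AB_sub]) (simp add: pairs_fin)

lemma AB_card: "card (AB q) \<le> 4 * (q * q)"
proof -
  let ?P = "color_pairs q"
  have "card (AB q) \<le> card ((\<lambda>(c,d). Alpha c d c) ` ?P \<union> (\<lambda>(c,d). Alpha c d d) ` ?P
   \<union> (\<lambda>(c,d). Beta c d c) ` ?P \<union> (\<lambda>(c,d). Beta c d d) ` ?P)"
    by (rule card_mono) (simp_all add: pairs_fin AB_sub)
  also have "\<dots> \<le> card ((\<lambda>(c,d). Alpha c d c) ` ?P) + card ((\<lambda>(c,d). Alpha c d d) ` ?P)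
   + card ((\<lambda>(c,d). Beta c d c) ` ?P) + card ((\<lambda>(c,d). Beta c d d) ` ?P)"
    by (meson add_le_mono card_Un_le le_refl order_trans)
  also have "\<dots> \<le> card ?P + card ?P + card ?P + card ?P"
    by (intro add_le_mono card_image_le pairs_fin)
  also have "\<dots> \<le> 4 * (q * q)" using pairs_card[of q] by simp
  finally show ?thesis .
qed

lemma guards_card: "card (guards q) \<le> q + q * q"
proof -
  have "card (guards q) \<le> card (GC ` {1..q}) + card ((case_prod GCP) ` color_pairs q)"
    unfolding guards_def by (rule card_Un_le)
  also have "\<dots> \<le> q + q * q"
    using card_image_le[of "{1..q}" GC] card_image_le[OF pairs_fin, of "case_prod GCP" q] pairs_card[of q]
    by simp
  finally show ?thesis .
qed

lemma guards_fin: "finite (guards q)"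
  unfolding guards_def using pairs_fin by simp

lemma sg_edge: "simple_graph V E \<Longrightarrow> e \<in> E \<Longrightarrow> e \<subseteq> V"
proof -
  assume "simple_graph V E" "e \<in> E"
  then obtain u v where "e = {u, v}" "u \<in> V" "v \<in> V" unfolding simple_graph_def by blast
  then show "e \<subseteq> V" by simp
qed

lemma sg_finE: "simple_graph V E \<Longrightarrow> finite E"
proof -
  assume sg: "simple_graph V E"
  then have "E \<subseteq> Pow V" using sg_edge by blast
  moreover have "finite (Pow V)" using sg unfolding simple_graph_def by simp
  ultimately show "finite E" by (rule finite_subset)
qed

lemma gadget_info:
  assumes sg: "simple_graph V E" and lowV: "low ` V \<subseteq> {1..card V}"
  and g: "(a, x, h) \<in> gadgets V E col q low"
  shows "a \<in> AB q \<and> ((\<exists>v\<in>V. x = XV v) \<or> (\<exists>e\<in>E. x = XE e)) \<and> h \<le> 2 * card V"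
proof -
  have lv: "\<And>v. v \<in> V \<Longrightarrow> low v \<le> card V" using lowV by auto
  have hv: "\<And>v. high (card V) low v \<le> 2 * card V" by (simp add: high_def)
  have ev: "\<And>e v. e \<in> E \<Longrightarrow> v \<in> e \<Longrightarrow> v \<in> V" using sg_edge[OF sg] by blast
  have ABa: "Alpha c d k \<in> AB q" "Beta c d k \<in> AB q" if "(c, d) \<in> color_pairs q" "k \<in> {c, d}" for c d k
    using that unfolding AB_def by blast+
  from g show ?thesis unfolding gadgets_def Let_def
  proof (elim UnE)
    assume "(a, x, h) \<in> {(Alpha c d k, XV v, high (card V) low v) | c d k v.
        (c, d) \<in> color_pairs q \<and> k \<in> {c, d} \<and> v \<in> V \<and> col v = k}"
    then obtain c d k v where "a = Alpha c d k" "x = XV v" "h = high (card V) low v"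
      "(c, d) \<in> color_pairs q" "k \<in> {c, d}" "v \<in> V" by blast
    then show ?thesis using ABa hv by blast
  next
    assume "(a, x, h) \<in> {(Alpha c d k, XE e, low v) | c d k e v.
        (c, d) \<in> color_pairs q \<and> k \<in> {c, d} \<and> e \<in> E \<and> col ` e = {c, d} \<and> v \<in> e \<and> col v = k}"
    then obtain c d k e v where "a = Alpha c d k" "x = XE e" "h = low v"
      "(c, d) \<in> color_pairs q" "k \<in> {c, d}" "e \<in> E" "v \<in> e" by blast
    then show ?thesis using ABa lv ev by (metis le_trans mult_2 le_add1)
  next
    assume "(a, x, h) \<in> {(Beta c d k, XV v, low v) | c d k v.
        (c, d) \<in> color_pairs q \<and> k \<in> {c, d} \<and> v \<in> V \<and> col v = k}"
    then obtain c d k v where "a = Beta c d k" "x = XV v" "h = low v"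
      "(c, d) \<in> color_pairs q" "k \<in> {c, d}" "v \<in> V" by blast
    then show ?thesis using ABa lv by (metis le_trans mult_2 le_add1)
  next
    assume "(a, x, h) \<in> {(Beta c d k, XE e, high (card V) low v) | c d k e v.
        (c, d) \<in> color_pairs q \<and> k \<in> {c, d} \<and> e \<in> E \<and> col ` e = {c, d} \<and> v \<in> e \<and> col v = k}"
    then obtain c d k e v where "a = Beta c d k" "x = XE e" "h = high (card V) low v"
      "(c, d) \<in> color_pairs q" "k \<in> {c, d}" "e \<in> E" by blast
    then show ?thesis using ABa hv by blast
  qed
qed


lemma conn_mem: "Conn a x i \<in> G'_nodes V E col q low \<longleftrightarrow> (\<exists>h. (a, x, h) \<in> gadgets V E col q low \<and> i < h)"
  unfolding G'_nodes_def by auto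

lemma K_simps:
  "XV v \<notin> guards q \<union> AB q" "XE e \<notin> guards q \<union> AB q" "Conn a x i \<notin> guards q \<union> AB q"
  "BN j \<notin> guards q \<union> AB q"
  by (auto simp: guards_def AB_def)

theorem lemma3:
  "\<exists>C::nat. \<forall>(V::nat set) E col q low.
     simple_graph V E \<and> proper_coloring V E col q \<and>
     inj_on low V \<and> low ` V \<subseteq> {1..card V}
     \<longrightarrow> treewidth (G'_nodes V E col q low) (G'_edges V E col q low) \<le> C * q\<^sup>2"
proof (intro exI[of _ 7] allI impI)
  fix V :: "nat set" and E col q low
  assume A: "simple_graph V E \<and> proper_coloring V E col q \<and> inj_on low V \<and> low ` V \<subseteq> {1..card V}"
  then have sg: "simple_graph V E" and pc: "proper_coloring V E col q"
    and lowV: "low ` V \<subseteq> {1..card V}" by auto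
  have finV: "finite V" using sg by (simp add: simple_graph_def)
  have finE: "finite E" using sg by (rule sg_finE)
  let ?N = "G'_nodes V E col q low"
  let ?E = "G'_edges V E col q low"
  define K where "K = guards q \<union> AB q"
  note gi = gadget_info[OF sg lowV]
  have finN: "finite ?N"
  proof -
    have c: "{Conn a x i | a x h i. (a, x, h) \<in> gadgets V E col q low \<and> i < h}
      \<subseteq> (\<lambda>(a,x,i). Conn a x i) ` (AB q \<times> (XV ` V \<union> XE ` E) \<times> {..<2 * card V})"
    proof
      fix y assume "y \<in> {Conn a x i | a x h i. (a, x, h) \<in> gadgets V E col q low \<and> i < h}"
      then obtain a x h i where y: "y = Conn a x i" "(a, x, h) \<in> gadgets V E col q low" "i < h" by blast
      from gi[OF y(2)] y(3) have "(a, x, i) \<in> AB q \<times> (XV ` V \<union> XE ` E) \<times> {..<2 * card V}" by auto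
      then show "y \<in> (\<lambda>(a,x,i). Conn a x i) ` (AB q \<times> (XV ` V \<union> XE ` E) \<times> {..<2 * card V})"
        using y(1) by force
    qed
    have f1: "finite {Conn a x i | a x h i. (a, x, h) \<in> gadgets V E col q low \<and> i < h}"
      by (rule finite_subset[OF c]) (simp add: AB_fin finV finE)
    have f2: "finite {Alpha c d k | c d k. (c, d) \<in> color_pairs q \<and> k \<in> {c, d}}"
      by (rule finite_subset[OF _ AB_fin[of q]]) (auto simp: AB_def)
    have f3: "finite {Beta c d k | c d k. (c, d) \<in> color_pairs q \<and> k \<in> {c, d}}"
      by (rule finite_subset[OF _ AB_fin[of q]]) (auto simp: AB_def)
    show ?thesis unfolding G'_nodes_def using f1 f2 f3 finV finE pairs_fin by simp
  qed
  have KN: "K \<subseteq> ?N" unfolding K_def guards_def AB_def G'_nodes_def by blast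
  have xN: "x \<in> ?N - K \<and> pmap x = x" if "(a, x, h) \<in> gadgets V E col q low" for a x h
  proof -
    from gi[OF that] have "(\<exists>v\<in>V. x = XV v) \<or> (\<exists>e\<in>E. x = XE e)" by blast
    then show ?thesis unfolding K_def using K_simps by (auto simp: G'_nodes_def pmap_def)
  qed
  have pW: "pmap y \<in> ?N - K \<and> pmap (pmap y) = pmap y" if y: "y \<in> ?N - K" for y
  proof (cases y)
    case (Conn a x i)
    then obtain h where "(a, x, h) \<in> gadgets V E col q low" using y conn_mem by auto
    then show ?thesis using xN Conn by (simp add: pmap_def)
  qed (use y in \<open>simp_all add: pmap_def\<close>)
  have Ecov: "e \<subseteq> K \<or> (\<exists>y\<in>?N-K. e \<subseteq> K \<union> {y, pmap y})" if eE: "e \<in> ?E" for e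
  proof -
    have inNK: "\<And>y. y \<in> ?N \<Longrightarrow> y \<notin> K \<Longrightarrow> y \<in> ?N - K" by simp
    from eE show ?thesis unfolding G'_edges_def
    proof (elim UnE)
      assume "e \<in> {{GC c, XV v} | c v. c \<in> {1..q} \<and> v \<in> V \<and> col v = c}"
      then obtain c v where cv: "e = {GC c, XV v}" "c \<in> {1..q}" "v \<in> V" by blast
      have "XV v \<in> ?N - K" using cv K_simps unfolding K_def by (auto simp: G'_nodes_def)
      moreover have "GC c \<in> K" using cv by (auto simp: K_def guards_def)
      ultimately show ?thesis using cv by (intro disjI2 bexI[of _ "XV v"]) auto
    next
      assume "e \<in> {{GCP c d, XE e} | c d e. (c, d) \<in> color_pairs q \<and> e \<in> E \<and> col ` e = {c, d}}"
      then obtain c d f where cv: "e = {GCP c d, XE f}" "(c, d) \<in> color_pairs q" "f \<in> E" by blast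
      have "XE f \<in> ?N - K" using cv K_simps unfolding K_def by (auto simp: G'_nodes_def)
      moreover have "GCP c d \<in> K" using cv by (force simp: K_def guards_def)
      ultimately show ?thesis using cv by (intro disjI2 bexI[of _ "XE f"]) auto
    next
      assume "e \<in> {{a, Conn a x i} | a x h i. (a, x, h) \<in> gadgets V E col q low \<and> i < h}"
      then obtain a x h i where cv: "e = {a, Conn a x i}" "(a, x, h) \<in> gadgets V E col q low" "i < h" by blast
      have "Conn a x i \<in> ?N - K" using cv K_simps conn_mem unfolding K_def by blast
      moreover have "a \<in> K" using gi[OF cv(2)] by (simp add: K_def)
      ultimately show ?thesis using cv by (intro disjI2 bexI[of _ "Conn a x i"]) auto
    next
      assume "e \<in> {{Conn a x i, x} | a x h i. (a, x, h) \<in> gadgets V E col q low \<and> i < h}"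
      then obtain a x h i where cv: "e = {Conn a x i, x}" "(a, x, h) \<in> gadgets V E col q low" "i < h" by blast
      have "Conn a x i \<in> ?N - K" using cv K_simps conn_mem unfolding K_def by blast
      then show ?thesis using cv by (intro disjI2 bexI[of _ "Conn a x i"]) (auto simp: pmap_def)
    next
      assume "e \<in> {{BN j, g} | j g. j < B_size V E q \<and> g \<in> guards q}"
      then obtain j g where cv: "e = {BN j, g}" "j < B_size V E q" "g \<in> guards q" by blast
      have "BN j \<in> ?N - K" using cv K_simps unfolding K_def by (auto simp: G'_nodes_def)
      moreover have "g \<in> K" using cv by (simp add: K_def)
      ultimately show ?thesis using cv by (intro disjI2 bexI[of _ "BN j"]) auto
    qed
  qed
  obtain I F bag where td: "tree_decomposition ?N ?E I F bag" and finI: "finite I" and Ine: "I \<noteq> {}"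
    and cb: "\<forall>i\<in>I. card (bag i) \<le> card K + 2"
    using star_decomp[OF finN KN, of pmap ?E] pW Ecov by blast
  show "treewidth ?N ?E \<le> 7 * q\<^sup>2"
  proof (cases "q = 0")
    case True
    then have V0: "V = {}" using pc by (auto simp: proper_coloring_def)
    have E0: "E = {}"
    proof -
      have "\<And>e. e \<in> E \<Longrightarrow> False"
      proof -
        fix e assume "e \<in> E"
        then obtain u v where "e = {u, v}" "u \<in> V" using sg unfolding simple_graph_def by blast
        then show False using V0 by simp
      qed
      then show ?thesis by blast
    qed
    have "?N = {}" using True V0 E0
      by (simp add: G'_nodes_def gadgets_def color_pairs_def B_size_def)
    then have "\<forall>i\<in>I. card (bag i) \<le> 0" using tdecomp_card[OF td finN] by simp
    then have "treewidth ?N ?E \<le> 0 - 1" by (rule tw_le[OF td finI Ine])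
    then show ?thesis by simp
  next
    case False
    have "card K \<le> card (guards q) + card (AB q)" unfolding K_def by (rule card_Un_le)
    also have "\<dots> \<le> q + q * q + 4 * (q * q)" using guards_card[of q] AB_card[of q] by simp
    finally have cK: "card K \<le> q + 5 * (q * q)" by simp
    have "treewidth ?N ?E \<le> card K + 2 - 1" by (rule tw_le[OF td finI Ine cb])
    also have "\<dots> \<le> q + 5 * (q * q) + 1" using cK by simp
    also have "\<dots> \<le> 7 * q\<^sup>2"
    proof -
      have "q \<le> q * q" "1 \<le> q * q" using False by auto
      then have "q + 5 * (q * q) + 1 \<le> 7 * (q * q)" by linarith
      then show ?thesis by (simp add: power2_eq_square)
    qed
    finally show ?thesis .
  qed
qed

end
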